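(* Let $r\ge 2$ and let $GT(r)$ be the glued binary tree of depth $r$. Then $\mathrm{gp}(GT(r))=2^r$.
   Context: The complete binary tree of depth $r$ is the rooted tree in which every non-leaf vertex has exactly two children and all $2^r$ leaves are at distance $r$ from the root. The glued binary tree $GT(r)$ is obtained from two copies of the complete binary tree of depth $r$ by identifying each leaf of the first copy with the corresponding leaf of the second copy (so it has $2^r$ identified vertices, called quasi-leaves). A set of vertices of a graph is a general position set if no three of its vertices lie on a common geodesic (shortest path); $\mathrm{gp}(G)$ is the maximum cardinality of a general position set of $G$. *)

theory Defs
  imports Main
begin

definition is_walk :: "'a set \<Rightarrow> ('a \<Rightarrow> 'a \<Rightarrow> bool) \<Rightarrow> 'a list \<Rightarrow> bool" where
  "is_walk V E xs \<longleftrightarrow> xs \<noteq> [] \<and> set xs \<subseteq> V \<and>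
     (\<forall>i. Suc i < length xs \<longrightarrow> E (xs ! i) (xs ! Suc i))"

definition gdist :: "'a set \<Rightarrow> ('a \<Rightarrow> 'a \<Rightarrow> bool) \<Rightarrow> 'a \<Rightarrow> 'a \<Rightarrow> nat" where
  "gdist V E x y = (LEAST n. \<exists>xs. is_walk V E xs \<and> hd xs = x \<and> last xs = y \<and> length xs = Suc n)"

definition is_geodesic :: "'a set \<Rightarrow> ('a \<Rightarrow> 'a \<Rightarrow> bool) \<Rightarrow> 'a list \<Rightarrow> bool" where
  "is_geodesic V E xs \<longleftrightarrow> is_walk V E xs \<and> length xs = Suc (gdist V E (hd xs) (last xs))"

definition gp_set :: "'a set \<Rightarrow> ('a \<Rightarrow> 'a \<Rightarrow> bool) \<Rightarrow> 'a set \<Rightarrow> bool" where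
  "gp_set V E S \<longleftrightarrow> S \<subseteq> V \<and>
     \<not> (\<exists>u v w xs. u \<in> S \<and> v \<in> S \<and> w \<in> S \<and> u \<noteq> v \<and> v \<noteq> w \<and> u \<noteq> w \<and>
          is_geodesic V E xs \<and> u \<in> set xs \<and> v \<in> set xs \<and> w \<in> set xs)"

definition gp_number :: "'a set \<Rightarrow> ('a \<Rightarrow> 'a \<Rightarrow> bool) \<Rightarrow> nat" where
  "gp_number V E = Max (card ` {S. gp_set V E S})"

(* A vertex of a complete binary tree of depth r is a 0/1-word w (bool list) of length \<le> r,
   the root being [] and the children of w being w@[b].  A vertex of GT(r) is a pair (c,w):
   c selects the copy; the leaves (length w = r) are identified, represented with c = False. *)
definition gt_V :: "nat \<Rightarrow> (bool \<times> bool list) set" where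
  "gt_V r = {(c, w). length w < r \<or> (length w = r \<and> c = False)}"

definition gt_child :: "nat \<Rightarrow> bool \<times> bool list \<Rightarrow> bool \<times> bool list \<Rightarrow> bool" where
  "gt_child r x y \<longleftrightarrow> x \<in> gt_V r \<and> length (snd x) < r \<and>
     (\<exists>b. snd y = snd x @ [b]) \<and>
     fst y = (if length (snd y) = r then False else fst x)"

definition gt_E :: "nat \<Rightarrow> bool \<times> bool list \<Rightarrow> bool \<times> bool list \<Rightarrow> bool" where
  "gt_E r x y \<longleftrightarrow> gt_child r x y \<or> gt_child r y x"

end

theory Submission
  imports Defs
begin

lemma walk_iff: "is_walk V E xs \<longleftrightarrow> xs \<noteq> [] \<and> set xs \<subseteq> V \<and> successively E xs"
  unfolding is_walk_def successively_conv_nth by blast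

lemma walk_join:
  assumes "is_walk V E xs" "is_walk V E ys" "last xs = hd ys"
  shows "is_walk V E (xs @ tl ys)"
proof -
  obtain y ys' where ys: "ys = y # ys'" using assms(2) by (cases ys) (auto simp: walk_iff)
  have "successively E ys" using assms(2) by (simp add: walk_iff)
  hence s: "successively E (tl ys)" and e: "tl ys \<noteq> [] \<Longrightarrow> E (hd ys) (hd (tl ys))"
    using ys by (auto simp: successively_Cons)
  have "set (tl ys) \<subseteq> set ys" by (auto simp: ys)
  thus ?thesis using assms s e by (auto simp: walk_iff successively_append_iff)
qed

lemma join_props:
  assumes "xs \<noteq> []" "ys \<noteq> []" "last xs = hd ys"
  shows "hd (xs @ tl ys) = hd xs \<and> last (xs @ tl ys) = last ys \<and>
         length (xs @ tl ys) = length xs + length ys - 1"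
  using assms by (cases ys) auto

lemma walk_rev:
  assumes "is_walk V E xs" "\<And>x y. E x y \<Longrightarrow> E y x"
  shows "is_walk V E (rev xs)"
  using assms by (auto simp: walk_iff intro: successively_mono)

lemma walk_take:
  assumes "is_walk V E xs" "0 < n"
  shows "is_walk V E (take n xs)"
proof -
  have "successively E (take n xs @ drop n xs)" using assms by (simp add: walk_iff)
  hence "successively E (take n xs)" unfolding successively_append_iff by blast
  moreover have "set (take n xs) \<subseteq> set xs" by (rule set_take_subset)
  ultimately show ?thesis using assms by (auto simp: walk_iff)
qed

lemma walk_drop:
  assumes "is_walk V E xs" "n < length xs"
  shows "is_walk V E (drop n xs)"
proof -
  have "successively E (take n xs @ drop n xs)" using assms by (simp add: walk_iff)
  hence "successively E (drop n xs)" unfolding successively_append_iff by blast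
  moreover have "set (drop n xs) \<subseteq> set xs" by (rule set_drop_subset)
  ultimately show ?thesis using assms by (auto simp: walk_iff)
qed

lemma last_take_Suc: "i < length xs \<Longrightarrow> last (take (Suc i) xs) = xs ! i"
  by (subst last_conv_nth) auto

lemma gdist_le:
  assumes "is_walk V E xs"
  shows "gdist V E (hd xs) (last xs) \<le> length xs - 1"
proof -
  have "length xs = Suc (length xs - 1)" using assms by (cases xs) (auto simp: walk_iff)
  thus ?thesis unfolding gdist_def using assms by (intro Least_le) blast
qed

lemma gdist_ex:
  assumes "is_walk V E xs"
  shows "\<exists>ys. is_walk V E ys \<and> hd ys = hd xs \<and> last ys = last xs \<and>
            length ys = Suc (gdist V E (hd xs) (last xs))"
proof -
  have "length xs = Suc (length xs - 1)" using assms by (cases xs) (auto simp: walk_iff)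
  hence "\<exists>n xs'. is_walk V E xs' \<and> hd xs' = hd xs \<and> last xs' = last xs \<and> length xs' = Suc n"
    using assms by blast
  then show ?thesis unfolding gdist_def by (rule LeastI_ex)
qed

lemma walk_lip:
  fixes f :: "'a \<Rightarrow> int"
  assumes "is_walk V E xs" "\<And>x y. E x y \<Longrightarrow> \<bar>f x - f y\<bar> \<le> 1"
  shows "\<bar>f (hd xs) - f (last xs)\<bar> \<le> int (length xs) - 1"
proof -
  have "successively E xs" "xs \<noteq> []" using assms(1) by (auto simp: walk_iff)
  thus ?thesis
  proof (induction xs)
    case Nil then show ?case by simp
  next
    case (Cons a xs)
    show ?case
    proof (cases xs)
      case Nil then show ?thesis by simp
    next
      case (Cons b ys)
      with Cons.prems have "E a b" "successively E xs" by auto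
      with Cons.IH Cons have "\<bar>f (hd xs) - f (last xs)\<bar> \<le> int (length xs) - 1" by simp
      moreover have "\<bar>f a - f b\<bar> \<le> 1" using assms(2) \<open>E a b\<close> by blast
      ultimately show ?thesis using Cons by auto
    qed
  qed
qed

lemma gdist_lip:
  fixes f :: "'a \<Rightarrow> int"
  assumes "is_walk V E xs" "\<And>x y. E x y \<Longrightarrow> \<bar>f x - f y\<bar> \<le> 1"
  shows "\<bar>f (hd xs) - f (last xs)\<bar> \<le> int (gdist V E (hd xs) (last xs))"
proof -
  obtain ys where ys: "is_walk V E ys" "hd ys = hd xs" "last ys = last xs"
    "length ys = Suc (gdist V E (hd xs) (last xs))" using gdist_ex[OF assms(1)] by blast
  from walk_lip[OF ys(1) assms(2)] ys show ?thesis by simp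
qed

lemma geo_seg:
  assumes g: "is_geodesic V E xs" and ik: "i \<le> k" "k < length xs"
  shows "k - i \<le> gdist V E (xs ! i) (xs ! k)"
proof -
  have w: "is_walk V E xs" and len: "length xs = Suc (gdist V E (hd xs) (last xs))"
    using g by (auto simp: is_geodesic_def)
  define A where "A = take (Suc i) xs"
  define B0 where "B0 = drop i (take (Suc k) xs)"
  define C where "C = drop k xs"
  have xsne: "xs \<noteq> []" using ik by auto
  have wA: "is_walk V E A" unfolding A_def by (rule walk_take[OF w]) simp
  have A: "hd A = hd xs" "last A = xs ! i" "length A = Suc i"
    using ik xsne by (auto simp: A_def hd_take last_take_Suc)
  have wt: "is_walk V E (take (Suc k) xs)" by (rule walk_take[OF w]) simp
  have wB0: "is_walk V E B0" unfolding B0_def by (rule walk_drop[OF wt]) (use ik in auto)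
  have B0: "hd B0 = xs ! i" "last B0 = xs ! k"
    using ik by (auto simp: B0_def hd_drop_conv_nth last_drop last_take_Suc)
  obtain B where B: "is_walk V E B" "hd B = xs ! i" "last B = xs ! k"
    "length B = Suc (gdist V E (xs ! i) (xs ! k))" using gdist_ex[OF wB0] B0 by auto
  have wC: "is_walk V E C" unfolding C_def by (rule walk_drop[OF w]) (use ik in auto)
  have C: "hd C = xs ! k" "last C = last xs" "length C = length xs - k"
    using ik by (auto simp: C_def hd_drop_conv_nth)
  have wAB: "is_walk V E (A @ tl B)" by (rule walk_join[OF wA B(1)]) (simp add: A B)
  have AB: "hd (A @ tl B) = hd xs" "last (A @ tl B) = xs ! k"
    "length (A @ tl B) = Suc i + gdist V E (xs ! i) (xs ! k)"
    using join_props[of A B] A B wA by (auto simp: walk_iff)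
  have wABC: "is_walk V E ((A @ tl B) @ tl C)" by (rule walk_join[OF wAB wC]) (simp add: AB C)
  have ABC: "hd ((A @ tl B) @ tl C) = hd xs" "last ((A @ tl B) @ tl C) = last xs"
    "length ((A @ tl B) @ tl C) = Suc i + gdist V E (xs ! i) (xs ! k) + (length xs - k - 1)"
    using join_props[of "A @ tl B" C] AB C wC wAB by (auto simp: walk_iff)
  from gdist_le[OF wABC] ABC len ik show ?thesis by simp
qed


fun lcp :: "'a list \<Rightarrow> 'a list \<Rightarrow> nat" where
  "lcp (a # xs) (b # ys) = (if a = b then Suc (lcp xs ys) else 0)"
| "lcp _ _ = 0"

lemma lcp_le: "lcp x y \<le> length x"
  by (induction x y rule: lcp.induct) auto

lemma lcp_sym: "lcp x y = lcp y x"
  by (induction x y rule: lcp.induct) auto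

lemma lcp_take: "take (lcp x y) x = take (lcp x y) y"
  by (induction x y rule: lcp.induct) auto

lemma lcp_self: "lcp x x = length x"
  by (induction x) auto

lemma lcp_less: "length x = length y \<Longrightarrow> x \<noteq> y \<Longrightarrow> lcp x y < length x"
  by (induction x y rule: lcp.induct) auto

lemma lcp_ultra: "min (lcp x y) (lcp y z) \<le> lcp x z"
proof (induction x arbitrary: y z)
  case Nil then show ?case by simp
next
  case (Cons a x)
  show ?case
  proof (cases y)
    case Nil then show ?thesis by simp
  next
    case (Cons b y')
    show ?thesis
    proof (cases z)
      case Nil then show ?thesis by simp
    next
      case (Cons c z')
      with \<open>y = b # y'\<close> show ?thesis using Cons.IH[of y' z'] by auto
    qed
  qed
qed

lemma lcp_snoc: "lcp (u @ [b]) l = lcp u l \<or> lcp (u @ [b]) l = Suc (lcp u l)"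
proof (induction u arbitrary: l)
  case Nil then show ?case by (cases l) auto
next
  case (Cons a u)
  then show ?case by (cases l) auto
qed

definition gfun :: "bool list \<Rightarrow> bool \<times> bool list \<Rightarrow> int" where
  "gfun l x = int (length (snd x)) - 2 * int (lcp (snd x) l)"

lemma gt_E_snd: "gt_E r x y \<Longrightarrow> (\<exists>b. snd y = snd x @ [b]) \<or> (\<exists>b. snd x = snd y @ [b])"
  unfolding gt_E_def gt_child_def by blast

lemma gt_E_sym: "gt_E r x y \<Longrightarrow> gt_E r y x"
  unfolding gt_E_def by blast

lemma gfun_lip: "gt_E r x y \<Longrightarrow> \<bar>gfun l x - gfun l y\<bar> \<le> 1"
proof -
  have key: "\<bar>gfun l (c, u) - gfun l (d, u @ [b])\<bar> \<le> 1" for c d u b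
    using lcp_snoc[of u b l] by (auto simp: gfun_def)
  assume "gt_E r x y"
  from gt_E_snd[OF this] show ?thesis
  proof
    assume "\<exists>b. snd y = snd x @ [b]"
    then obtain b where "snd y = snd x @ [b]" by blast
    then show ?thesis using key[of "fst x" "snd x" "fst y" b]
      by (metis prod.collapse)
  next
    assume "\<exists>b. snd x = snd y @ [b]"
    then obtain b where "snd x = snd y @ [b]" by blast
    then show ?thesis using key[of "fst y" "snd y" "fst x" b]
      by (metis abs_minus_commute prod.collapse)
  qed
qed

definition vert :: "nat \<Rightarrow> bool \<Rightarrow> bool list \<Rightarrow> bool \<times> bool list" where
  "vert r c u = (if length u = r then False else c, u)"

lemma vert_in: "length u \<le> r \<Longrightarrow> vert r c u \<in> gt_V r"
  by (auto simp: vert_def gt_V_def)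

lemma vert_edge: "length u < r \<Longrightarrow> gt_E r (vert r c u) (vert r c (u @ [b]))"
  unfolding gt_E_def gt_child_def using vert_in[of u r c] by (auto simp: vert_def)

definition vpath :: "nat \<Rightarrow> bool \<Rightarrow> bool list \<Rightarrow> nat \<Rightarrow> (bool \<times> bool list) list" where
  "vpath r c w m = map (\<lambda>i. vert r c (take i w)) [m..<Suc (length w)]"

lemma vpath_walk:
  assumes "length w \<le> r" "m \<le> length w"
  shows "is_walk (gt_V r) (gt_E r) (vpath r c w m)"
  unfolding is_walk_def
proof (intro conjI allI impI)
  show "vpath r c w m \<noteq> []" using assms by (simp add: vpath_def)
  show "set (vpath r c w m) \<subseteq> gt_V r" using assms by (auto simp: vpath_def intro!: vert_in)
  fix i assume i: "Suc i < length (vpath r c w m)"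
  hence mi: "m + i < length w" by (simp add: vpath_def del: upt_Suc)
  have "take (Suc (m + i)) w = take (m + i) w @ [w ! (m + i)]"
    using mi by (simp add: take_Suc_conv_app_nth)
  moreover have "vpath r c w m ! i = vert r c (take (m + i) w)"
    "vpath r c w m ! Suc i = vert r c (take (Suc (m + i)) w)"
    using i by (auto simp: vpath_def simp del: upt_Suc)
  ultimately show "gt_E r (vpath r c w m ! i) (vpath r c w m ! Suc i)"
    using mi assms by (metis vert_edge length_take min_absorb2 less_imp_le_nat order.strict_trans2)
qed

lemma vpath_props:
  assumes "m \<le> length w"
  shows "hd (vpath r c w m) = vert r c (take m w)" "last (vpath r c w m) = vert r c w"
    "length (vpath r c w m) = Suc (length w) - m" "vpath r c w m \<noteq> []"
  using assms by (auto simp: vpath_def hd_conv_nth last_conv_nth simp del: upt_Suc)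

lemma vpath_mem: "m \<le> i \<Longrightarrow> i \<le> length w \<Longrightarrow> vert r c (take i w) \<in> set (vpath r c w m)"
  by (auto simp: vpath_def simp del: upt_Suc)



section \<open>Leaves form a general position set\<close>

lemma leaf_seg_lower:
  assumes w: "is_walk (gt_V r) (gt_E r) xs" and ij: "i \<le> j" "j < length xs"
    and xi: "xs ! i = (False, x)" and yj: "xs ! j = (False, y)"
    and lx: "length x = r" and ly: "length y = r"
  shows "2 * (r - lcp x y) \<le> j - i"
proof -
  have wt: "is_walk (gt_V r) (gt_E r) (take (Suc j) xs)" by (rule walk_take[OF w]) simp
  define W where "W = drop i (take (Suc j) xs)"
  have wW: "is_walk (gt_V r) (gt_E r) W" unfolding W_def by (rule walk_drop[OF wt]) (use ij in auto)
  have W: "hd W = (False, x)" "last W = (False, y)" "length W = Suc j - i"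
    using ij xi yj by (auto simp: W_def hd_drop_conv_nth last_take_Suc)
  have "\<bar>gfun x (hd W) - gfun x (last W)\<bar> \<le> int (length W) - 1"
    by (rule walk_lip[OF wW gfun_lip])
  moreover have "lcp y x \<le> r" using lcp_le[of y x] ly by simp
  ultimately show ?thesis using W lx ly ij by (simp add: gfun_def lcp_self lcp_sym[of y x])
qed

lemma leaf_dist_upper:
  assumes lx: "length x = r" and lz: "length z = r"
  shows "gdist (gt_V r) (gt_E r) (False, x) (False, z) \<le> 2 * (r - lcp x z)"
proof -
  define m where "m = lcp x z"
  have mx: "m \<le> r" using lcp_le[of x z] lx by (simp add: m_def)
  have tk: "take m x = take m z" unfolding m_def by (rule lcp_take)
  define P where "P = vpath r False x m"
  define Q where "Q = vpath r False z m"
  have wP: "is_walk (gt_V r) (gt_E r) (rev P)" unfolding P_def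
    by (rule walk_rev[OF vpath_walk gt_E_sym]) (use lx mx in auto)
  have wQ: "is_walk (gt_V r) (gt_E r) Q" unfolding Q_def
    by (rule vpath_walk) (use lz mx in auto)
  have P: "hd P = vert r False (take m x)" "last P = vert r False x" "length P = Suc r - m" "P \<noteq> []"
    unfolding P_def using vpath_props[of m x r False] lx mx by auto
  have Q: "hd Q = vert r False (take m z)" "last Q = vert r False z" "length Q = Suc r - m" "Q \<noteq> []"
    unfolding Q_def using vpath_props[of m z r False] lz mx by auto
  have j: "last (rev P) = hd Q" using P Q tk by (simp add: last_rev)
  have wW: "is_walk (gt_V r) (gt_E r) (rev P @ tl Q)" by (rule walk_join[OF wP wQ j])
  have W: "hd (rev P @ tl Q) = (False, x)" "last (rev P @ tl Q) = (False, z)"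
    "length (rev P @ tl Q) = 2 * (Suc r - m) - 1"
    using join_props[of "rev P" Q] P Q j lx lz by (auto simp: vert_def hd_rev)
  from gdist_le[OF wW] W show ?thesis by (simp add: m_def)
qed

definition leaves :: "nat \<Rightarrow> (bool \<times> bool list) set" where
  "leaves r = Pair False ` {w. length w = r}"

lemma leaves_core:
  assumes g: "is_geodesic (gt_V r) (gt_E r) xs" and ijk: "i < j" "j < k" "k < length xs"
    and xi: "xs ! i = (False, x)" and yj: "xs ! j = (False, y)" and zk: "xs ! k = (False, z)"
    and l: "length x = r" "length y = r" "length z = r"
    and d: "x \<noteq> y" "y \<noteq> z" "x \<noteq> z"
  shows False
proof -
  have w: "is_walk (gt_V r) (gt_E r) xs" using g by (simp add: is_geodesic_def)
  have a: "2 * (r - lcp x y) \<le> j - i" by (rule leaf_seg_lower[OF w _ _ xi yj]) (use ijk l in auto)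
  have b: "2 * (r - lcp y z) \<le> k - j" by (rule leaf_seg_lower[OF w _ _ yj zk]) (use ijk l in auto)
  have c: "k - i \<le> gdist (gt_V r) (gt_E r) (False, x) (False, z)"
    using geo_seg[OF g, of i k] ijk xi zk by simp
  have c2: "gdist (gt_V r) (gt_E r) (False, x) (False, z) \<le> 2 * (r - lcp x z)"
    by (rule leaf_dist_upper) (use l in auto)
  have u: "min (lcp x y) (lcp y z) \<le> lcp x z" by (rule lcp_ultra)
  have "lcp x y < r" "lcp y z < r" "lcp x z < r" using lcp_less l d by metis+
  then show False using a b c c2 u ijk by linarith
qed

lemma leaves_gp: "gp_set (gt_V r) (gt_E r) (leaves r)"
  unfolding gp_set_def
proof (intro conjI notI)
  show "leaves r \<subseteq> gt_V r" by (auto simp: leaves_def gt_V_def)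
  assume "\<exists>u v w xs. u \<in> leaves r \<and> v \<in> leaves r \<and> w \<in> leaves r \<and> u \<noteq> v \<and> v \<noteq> w \<and> u \<noteq> w \<and>
          is_geodesic (gt_V r) (gt_E r) xs \<and> u \<in> set xs \<and> v \<in> set xs \<and> w \<in> set xs"
  then obtain u v w xs where uvw: "u \<in> leaves r" "v \<in> leaves r" "w \<in> leaves r" "u \<noteq> v" "v \<noteq> w" "u \<noteq> w"
    and g: "is_geodesic (gt_V r) (gt_E r) xs" and m: "u \<in> set xs" "v \<in> set xs" "w \<in> set xs"
    by blast
  have core: "False" if as: "i < j" "j < k" "k < length xs" "xs ! i \<in> leaves r" "xs ! j \<in> leaves r"
    "xs ! k \<in> leaves r" "xs ! i \<noteq> xs ! j" "xs ! j \<noteq> xs ! k" "xs ! i \<noteq> xs ! k" for i j k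
  proof -
    obtain x y z where "xs ! i = (False, x)" "xs ! j = (False, y)" "xs ! k = (False, z)"
      "length x = r" "length y = r" "length z = r" using as(4-6) by (auto simp: leaves_def)
    then show False using leaves_core[OF g as(1-3)] as(7-9) by auto
  qed
  obtain i where i: "i < length xs" "xs ! i = u" using m(1) by (auto simp: in_set_conv_nth)
  obtain j where j: "j < length xs" "xs ! j = v" using m(2) by (auto simp: in_set_conv_nth)
  obtain k where k: "k < length xs" "xs ! k = w" using m(3) by (auto simp: in_set_conv_nth)
  have "i \<noteq> j" "j \<noteq> k" "i \<noteq> k" using i j k uvw by auto
  then have "i < j \<and> j < k \<or> i < k \<and> k < j \<or> j < i \<and> i < k \<or> j < k \<and> k < i \<or> k < i \<and> i < j \<or> k < j \<and> j < i"
    by linarith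
  then show False
    using core[of i j k] core[of i k j] core[of j i k] core[of j k i] core[of k i j] core[of k j i]
      i j k uvw by metis
qed

lemma card_leaves: "card (leaves r) = 2 ^ r"
proof -
  have "card (leaves r) = card {w :: bool list. length w = r}"
    unfolding leaves_def by (rule card_image) (auto simp: inj_on_def)
  also have "{w :: bool list. length w = r} = {w. set w \<subseteq> UNIV \<and> length w = r}" by simp
  also have "card \<dots> = 2 ^ r" using card_lists_length_eq[of "UNIV :: bool set" r] by simp
  finally show ?thesis .
qed


section \<open>Covering by 2^(r-1) geodesics\<close>

definition Gc :: "nat \<Rightarrow> bool list \<Rightarrow> bool \<Rightarrow> (bool \<times> bool list) list" where
  "Gc r t c = rev (vpath r c (False # t @ [c]) 0) @ tl (vpath r c (True # t @ [c]) 0)"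

lemma Gc_facts:
  assumes r: "r \<ge> 2" and t: "length t = r - 2"
  shows "is_geodesic (gt_V r) (gt_E r) (Gc r t c)"
    "set (Gc r t c) = set (vpath r c (False # t @ [c]) 0) \<union> set (vpath r c (True # t @ [c]) 0)"
proof -
  define x where "x = False # t @ [c]"
  define y where "y = True # t @ [c]"
  have lx: "length x = r" "length y = r" using r t by (auto simp: x_def y_def)
  define P where "P = vpath r c x 0"
  define Q where "Q = vpath r c y 0"
  have wP: "is_walk (gt_V r) (gt_E r) (rev P)" unfolding P_def
    by (rule walk_rev[OF vpath_walk gt_E_sym]) (use lx in auto)
  have wQ: "is_walk (gt_V r) (gt_E r) Q" unfolding Q_def
    by (rule vpath_walk) (use lx in auto)
  have P: "hd P = vert r c []" "last P = vert r c x" "length P = Suc r" "P \<noteq> []"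
    unfolding P_def using vpath_props[of 0 x r c] lx by auto
  have Q: "hd Q = vert r c []" "last Q = vert r c y" "length Q = Suc r" "Q \<noteq> []"
    unfolding Q_def using vpath_props[of 0 y r c] lx by auto
  have j: "last (rev P) = hd Q" using P Q by (simp add: last_rev)
  have wW: "is_walk (gt_V r) (gt_E r) (rev P @ tl Q)" by (rule walk_join[OF wP wQ j])
  have W: "hd (rev P @ tl Q) = (False, x)" "last (rev P @ tl Q) = (False, y)"
    "length (rev P @ tl Q) = Suc (2 * r)"
    using join_props[of "rev P" Q] P Q j lx by (auto simp: vert_def hd_rev)
  have up: "gdist (gt_V r) (gt_E r) (False, x) (False, y) \<le> 2 * r"
    using gdist_le[OF wW] W by simp
  have "\<bar>gfun x (hd (rev P @ tl Q)) - gfun x (last (rev P @ tl Q))\<bar>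
      \<le> int (gdist (gt_V r) (gt_E r) (hd (rev P @ tl Q)) (last (rev P @ tl Q)))"
    by (rule gdist_lip[OF wW gfun_lip])
  moreover have "lcp y x = 0" by (simp add: x_def y_def)
  ultimately have lo: "2 * r \<le> gdist (gt_V r) (gt_E r) (False, x) (False, y)"
    using W lx by (simp add: gfun_def lcp_self)
  show "is_geodesic (gt_V r) (gt_E r) (Gc r t c)"
    unfolding is_geodesic_def Gc_def using wW W up lo by (simp add: x_def y_def P_def Q_def)
  have "set Q = insert (hd Q) (set (tl Q))" using Q(4) by (cases Q) auto
  moreover have "hd Q \<in> set P" using P Q by (metis hd_in_set)
  ultimately show "set (Gc r t c) = set (vpath r c (False # t @ [c]) 0) \<union> set (vpath r c (True # t @ [c]) 0)"
    unfolding Gc_def x_def y_def P_def Q_def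
    by (auto simp: list.set_sel(2))
qed

lemma cover:
  assumes r: "r \<ge> 2" and v: "v \<in> gt_V r"
  shows "\<exists>t c. length t = r - 2 \<and> v \<in> set (Gc r t c)"
proof -
  obtain c' w where vcw: "v = (c', w)" by (cases v)
  have mem: "v \<in> set (Gc r t c)" if "length t = r - 2" "v = vert r c (take i (a # t @ [c]))"
    "i \<le> r" for t c a i
  proof -
    have "v \<in> set (vpath r c (a # t @ [c]) 0)"
      using vpath_mem[of 0 i "a # t @ [c]" r c] that r by auto
    then show ?thesis using Gc_facts(2)[OF r that(1)] by (cases a) auto
  qed
  show ?thesis
  proof (cases "length w = r")
    case True
    with v vcw have c': "c' = False" by (auto simp: gt_V_def)
    obtain a s where ws: "w = a # s" using True r by (cases w) auto
    have "s \<noteq> []" using ws True r by auto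
    then have s: "s = butlast s @ [last s]" by simp
    define t where "t = butlast s"
    have lt: "length t = r - 2" using True ws by (simp add: t_def)
    have "v = vert r (last s) (take r (a # t @ [last s]))"
      using True vcw c' ws s by (simp add: vert_def t_def)
    then have "v \<in> set (Gc r t (last s))" using mem[OF lt] by blast
    then show ?thesis using lt by blast
  next
    case False
    with v vcw have lw: "length w < r" by (auto simp: gt_V_def)
    show ?thesis
    proof (cases w)
      case Nil
      define t where "t = replicate (r - 2) False"
      have lt: "length t = r - 2" by (simp add: t_def)
      have "v = vert r c' (take 0 (False # t @ [c']))" using vcw Nil lw by (simp add: vert_def)
      then have "v \<in> set (Gc r t c')" using mem[OF lt] by blast
      then show ?thesis using lt by blast
    next
      case (Cons a s)
      define t where "t = s @ replicate (r - 2 - length s) False"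
      have lt: "length t = r - 2" using lw Cons by (simp add: t_def)
      have "take (length w) (a # t @ [c']) = w" using Cons by (simp add: t_def)
      then have "v = vert r c' (take (length w) (a # t @ [c']))" using vcw lw by (simp add: vert_def)
      then show ?thesis using mem[OF lt, where c=c' and a=a and i="length w"] lw lt by auto
    qed
  qed
qed

lemma gp_card_le:
  assumes r: "r \<ge> 2" and S: "gp_set (gt_V r) (gt_E r) S"
  shows "card S \<le> 2 ^ r"
proof -
  define I where "I = {t :: bool list. length t = r - 2} \<times> (UNIV :: bool set)"
  have TI: "{t :: bool list. length t = r - 2} = {t. set t \<subseteq> UNIV \<and> length t = r - 2}" by simp
  have finI: "finite I" unfolding I_def TI by (intro finite_cartesian_product finite_lists_length_eq) auto
  have cardI: "card I = 2 ^ (r - 2) * 2"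
    unfolding I_def card_cartesian_product TI using card_lists_length_eq[of "UNIV :: bool set" "r - 2"] by simp
  have Ssub: "S \<subseteq> gt_V r" using S by (simp add: gp_set_def)
  have SU: "S = (\<Union>p\<in>I. S \<inter> set (Gc r (fst p) (snd p)))"
  proof
    show "S \<subseteq> (\<Union>p\<in>I. S \<inter> set (Gc r (fst p) (snd p)))"
    proof
      fix v assume "v \<in> S"
      then obtain t c where "length t = r - 2" "v \<in> set (Gc r t c)" using cover[OF r] Ssub by blast
      then show "v \<in> (\<Union>p\<in>I. S \<inter> set (Gc r (fst p) (snd p)))"
        using \<open>v \<in> S\<close> unfolding I_def by force
    qed
  qed auto
  have le2: "card (S \<inter> set (Gc r (fst p) (snd p))) \<le> 2" if "p \<in> I" for p
  proof (rule ccontr)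
    let ?A = "S \<inter> set (Gc r (fst p) (snd p))"
    assume "\<not> ?thesis"
    then have "3 \<le> card ?A" by simp
    then obtain B where B: "B \<subseteq> ?A" "card B = 3" by (meson obtain_subset_with_card_n)
    then obtain x y z where "B = {x, y, z}" "x \<noteq> y" "y \<noteq> z" "x \<noteq> z"
      using card_3_iff[of B] B(2) by blast
    moreover have "is_geodesic (gt_V r) (gt_E r) (Gc r (fst p) (snd p))"
      using Gc_facts(1)[OF r] that unfolding I_def by auto
    ultimately show False using S B unfolding gp_set_def by blast
  qed
  have "card S \<le> (\<Sum>p\<in>I. card (S \<inter> set (Gc r (fst p) (snd p))))"
    by (subst SU) (rule card_UN_le[OF finI])
  also have "\<dots> \<le> card I * 2" using sum_bounded_above[of I "\<lambda>p. card (S \<inter> set (Gc r (fst p) (snd p)))" "2::nat"] le2 by simp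
  also have "\<dots> = 2 ^ r"
  proof -
    obtain n where "r = Suc (Suc n)" using r by (metis add_2_eq_Suc le_Suc_ex)
    then show ?thesis using cardI by simp
  qed
  finally show ?thesis .
qed

theorem proposition3p8:
  fixes r :: nat
  assumes "r \<ge> 2"
  shows "gp_number (gt_V r) (gt_E r) = 2 ^ r"
  unfolding gp_number_def
proof (rule Max_eqI)
  show "finite (card ` {S. gp_set (gt_V r) (gt_E r) S})"
    by (rule finite_subset[of _ "{..2 ^ r}"]) (use gp_card_le[OF assms] in auto)
  show "y \<le> 2 ^ r" if "y \<in> card ` {S. gp_set (gt_V r) (gt_E r) S}" for y
    using that gp_card_le[OF assms] by auto
  show "2 ^ r \<in> card ` {S. gp_set (gt_V r) (gt_E r) S}"
    using leaves_gp[of r] card_leaves[of r] by (metis (mono_tags, lifting) imageI mem_Collect_eq)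
qed

end
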